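(* Let $n,d,a$ be positive integers, $g:=\gcd(d,n)$, and assume $a\ge \frac{(n-g)(d-g)}{g}$. Then $(n,d,a)$ is bad if and only if $g\nmid a$.
   Context: Let $R=\mathbb{C}[x_1,\dots,x_n]$ with $\mathfrak{S}_n$ permuting the variables and $R_a^{\mathfrak{S}_n}$ the symmetric polynomials homogeneous of degree $a$. A triple $(n,d,a)$ of positive integers is good if there exists $f\in R_a^{\mathfrak{S}_n}$ such that $x_1^d-x_n^d,\dots,x_{n-1}^d-x_n^d,f$ is a regular sequence (equivalently, $f$ has no zero on $\mathcal{V}_d=\{(z_1,\dots,z_n)\in\mathbb{C}^n: z_i^d=1\ \forall i,\ z_n=1\}$); otherwise it is bad. *)

theory Defs
  imports "HOL-Combinatorics.Permutations" Complex_Main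
begin

text \<open>Polynomials in n variables x_0,...,x_(n-1) are encoded by coefficient functions on
exponent vectors. A homogeneous polynomial of degree a is a coefficient function restricted
to the (finite) set of exponent vectors supported in {..<n} of total degree a.\<close>

definition monomials :: "nat \<Rightarrow> nat \<Rightarrow> (nat \<Rightarrow> nat) set" where
  "monomials n a = {e. (\<forall>i\<ge>n. e i = 0) \<and> (\<Sum>i<n. e i) = a}"

definition hpoly_eval :: "nat \<Rightarrow> nat \<Rightarrow> ((nat \<Rightarrow> nat) \<Rightarrow> complex) \<Rightarrow> (nat \<Rightarrow> complex) \<Rightarrow> complex" where
  "hpoly_eval n a c z = (\<Sum>e\<in>monomials n a. c e * (\<Prod>i<n. z i ^ e i))"

definition symmetric_coeffs :: "nat \<Rightarrow> nat \<Rightarrow> ((nat \<Rightarrow> nat) \<Rightarrow> complex) \<Rightarrow> bool" where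
  "symmetric_coeffs n a c \<longleftrightarrow>
     (\<forall>\<sigma>. \<sigma> permutes {..<n} \<longrightarrow> (\<forall>e\<in>monomials n a. c (e \<circ> \<sigma>) = c e))"

text \<open>V_d = {z in C^n : z_i^d = 1 for all i, z_n = 1} (last variable is x_(n-1) here).\<close>
definition V_set :: "nat \<Rightarrow> nat \<Rightarrow> (nat \<Rightarrow> complex) set" where
  "V_set n d = {z. (\<forall>i<n. z i ^ d = 1) \<and> z (n - 1) = 1 \<and> (\<forall>i\<ge>n. z i = 0)}"

definition good_triple :: "nat \<Rightarrow> nat \<Rightarrow> nat \<Rightarrow> bool" where
  "good_triple n d a \<longleftrightarrow>
     (\<exists>c. symmetric_coeffs n a c \<and> (\<forall>z\<in>V_set n d. hpoly_eval n a c z \<noteq> 0))"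

definition bad_triple :: "nat \<Rightarrow> nat \<Rightarrow> nat \<Rightarrow> bool" where
  "bad_triple n d a \<longleftrightarrow> \<not> good_triple n d a"

end

theory Submission
  imports Defs "HOL-Library.Real_Mod"
begin

lemma finite_monomials: "finite (monomials n a)"
proof -
  have "monomials n a \<subseteq> (\<lambda>f i. if i < n then f i else 0) ` (PiE {..<n} (\<lambda>_. {..a}))"
  proof
    fix e assume e: "e \<in> monomials n a"
    have le: "e i \<le> a" if "i < n" for i
    proof -
      have "e i \<le> (\<Sum>j<n. e j)" using that by (intro member_le_sum) auto
      thus ?thesis using e by (simp add: monomials_def)
    qed
    let ?f = "restrict e {..<n}"
    have "?f \<in> PiE {..<n} (\<lambda>_. {..a})" using le by auto
    moreover have "e = (\<lambda>i. if i < n then ?f i else 0)"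
      using e by (auto simp: monomials_def fun_eq_iff)
    ultimately show "e \<in> (\<lambda>f i. if i < n then f i else 0) ` (PiE {..<n} (\<lambda>_. {..a}))"
      by blast
  qed
  moreover have "finite (PiE {..<n} (\<lambda>_::nat. {..a}))" by (intro finite_PiE) auto
  ultimately show ?thesis by (meson finite_surj)
qed

lemma hpoly_scale:
  "hpoly_eval n a c (\<lambda>l. w * z l) = w ^ a * hpoly_eval n a c z"
proof -
  have "(\<Prod>i<n. (w * z i) ^ e i) = w ^ a * (\<Prod>i<n. z i ^ e i)" if "e \<in> monomials n a" for e
  proof -
    have "(\<Prod>i<n. (w * z i) ^ e i) = (\<Prod>i<n. w ^ e i) * (\<Prod>i<n. z i ^ e i)"
      by (simp add: power_mult_distrib prod.distrib)
    also have "(\<Prod>i<n. w ^ e i) = w ^ (\<Sum>i<n. e i)" by (simp add: power_sum)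
    finally show ?thesis using that by (simp add: monomials_def)
  qed
  thus ?thesis unfolding hpoly_eval_def
    by (simp add: sum_distrib_left algebra_simps cong: sum.cong)
qed

lemma monomials_perm:
  assumes "\<sigma> permutes {..<n}" "e \<in> monomials n a"
  shows "e \<circ> \<sigma> \<in> monomials n a"
proof -
  have "(\<Sum>i<n. e (\<sigma> i)) = (\<Sum>i<n. e i)"
    using sum.permute[OF assms(1), of e] by (simp add: comp_def)
  moreover have "\<forall>i\<ge>n. e (\<sigma> i) = 0" using assms by (auto simp: permutes_def monomials_def)
  ultimately show ?thesis using assms(2) by (simp add: monomials_def)
qed

lemma hpoly_perm:
  assumes sym: "symmetric_coeffs n a c" and s: "\<sigma> permutes {..<n}"
  shows "hpoly_eval n a c (z \<circ> \<sigma>) = hpoly_eval n a c z"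
proof -
  let ?M = "monomials n a"
  let ?F = "\<lambda>e. c e * (\<Prod>i<n. (z \<circ> \<sigma>) i ^ e i)"
  have si: "inv \<sigma> permutes {..<n}" using s by (rule permutes_inv)
  have bij: "bij_betw (\<lambda>e. e \<circ> \<sigma>) ?M ?M"
  proof (rule bij_betw_byWitness[where f' = "\<lambda>e. e \<circ> inv \<sigma>"])
    show "\<forall>e\<in>?M. e \<circ> \<sigma> \<circ> inv \<sigma> = e"
      using s by (auto simp: fun_eq_iff permutes_inverses(1))
    show "\<forall>e\<in>?M. e \<circ> inv \<sigma> \<circ> \<sigma> = e"
      using s by (auto simp: fun_eq_iff permutes_inverses(2))
    show "(\<lambda>e. e \<circ> \<sigma>) ` ?M \<subseteq> ?M" using monomials_perm[OF s] by auto
    show "(\<lambda>e. e \<circ> inv \<sigma>) ` ?M \<subseteq> ?M" using monomials_perm[OF si] by auto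
  qed
  have "hpoly_eval n a c (z \<circ> \<sigma>) = sum ?F ?M" by (simp add: hpoly_eval_def)
  also have "\<dots> = sum (?F \<circ> (\<lambda>e. e \<circ> \<sigma>)) ?M"
    using sum.reindex_bij_betw[OF bij, of ?F] by simp
  also have "\<dots> = sum (\<lambda>e. c e * (\<Prod>i<n. z i ^ e i)) ?M"
  proof (rule sum.cong[OF refl])
    fix e assume e: "e \<in> ?M"
    have "c (e \<circ> \<sigma>) = c e" using sym s e by (simp add: symmetric_coeffs_def)
    moreover have "(\<Prod>i<n. z (\<sigma> i) ^ e (\<sigma> i)) = (\<Prod>i<n. z i ^ e i)"
      using prod.permute[OF s, of "\<lambda>i. z i ^ e i"] by (simp add: comp_def)
    ultimately show "(?F \<circ> (\<lambda>e. e \<circ> \<sigma>)) e = c e * (\<Prod>i<n. z i ^ e i)" by simp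
  qed
  finally show ?thesis by (simp add: hpoly_eval_def)
qed


lemma sylvester:
  fixes p q m :: nat
  assumes cop: "coprime q p" and p: "p > 0" and q: "q > 0"
    and m: "m \<ge> (p - 1) * (q - 1)"
  shows "\<exists>i j. m = i * p + j * q"
proof -
  obtain x y where xy: "q * x = p * y + gcd q p" using bezout_nat[of q p] q by auto
  with cop have xy: "q * x = p * y + 1" by simp
  define j where "j = (x * m) mod p"
  have "(j * q) mod p = (x * m * q) mod p" by (simp add: j_def mod_mult_left_eq)
  also have "x * m * q = m + p * (m * y)" using xy
    by (metis add.commute mult.commute mult.left_commute nat_mult_1_right distrib_left)
  also have "(m + p * (m * y)) mod p = m mod p" by simp
  finally have jq: "(j * q) mod p = m mod p" .
  show ?thesis
  proof (cases "j * q \<le> m")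
    case True
    then have "p dvd m - j * q" using jq mod_eq_dvd_iff_nat[OF True, of p] by simp
    then obtain k where "m - j * q = p * k" by blast
    with True have "m = k * p + j * q" by (simp add: mult.commute)
    thus ?thesis by blast
  next
    case False
    then have le: "m \<le> j * q" by simp
    then have "p dvd j * q - m" using jq mod_eq_dvd_iff_nat[OF le, of p] by simp
    moreover have "j * q - m > 0" using False by simp
    ultimately have "p \<le> j * q - m" by (simp add: dvd_imp_le)
    hence A: "j * q \<ge> p + m" using le by linarith
    have "j < p" using p by (simp add: j_def)
    hence "j \<le> p - 1" by simp
    hence B: "j * q \<le> (p - 1) * q" by (rule mult_right_mono) simp
    have C: "(p - 1) * q = (p - 1) * (q - 1) + (p - 1)" 
    proof -
      obtain Q where "q = Suc Q" using q not0_implies_Suc by blast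
      thus ?thesis by simp
    qed
    from A B C m p show ?thesis by linarith
  qed
qed


lemma pow_mod_root:
  fixes w :: complex
  assumes "w ^ d = 1"
  shows "w ^ k = w ^ (k mod d)"
proof -
  have "w ^ k = w ^ (d * (k div d) + k mod d)" by simp
  also have "\<dots> = (w ^ d) ^ (k div d) * w ^ (k mod d)" by (simp only: power_add power_mult)
  finally show ?thesis using assms by simp
qed

lemma good_if_repr:
  assumes n: "n > 0" and d: "d > 0" and a: "a = i * n + j * d"
  shows "good_triple n d a"
proof -
  define r where "r = i mod d"
  define P where "P = (\<lambda>e::nat\<Rightarrow>nat. \<forall>l<n. e l mod d = r)"
  define c where "c = (\<lambda>e. if P e then (1::complex) else 0)"
  have sym: "symmetric_coeffs n a c"
    unfolding symmetric_coeffs_def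
  proof (intro allI impI ballI)
    fix \<sigma> e assume s: "\<sigma> permutes {..<n}" and e: "e \<in> monomials n a"
    have "P (e \<circ> \<sigma>) = P e"
    proof
      assume h: "P (e \<circ> \<sigma>)"
      show "P e" unfolding P_def
      proof (intro allI impI)
        fix l assume l: "l < n"
        have "inv \<sigma> l < n" using permutes_in_image[OF permutes_inv[OF s]] l by simp
        with h have "e (\<sigma> (inv \<sigma> l)) mod d = r" by (simp add: P_def)
        thus "e l mod d = r" using permutes_inverses(1)[OF s] by simp
      qed
    next
      assume h: "P e"
      show "P (e \<circ> \<sigma>)" unfolding P_def
        using h permutes_in_image[OF s] by (simp add: P_def)
    qed
    thus "c (e \<circ> \<sigma>) = c e" by (simp add: c_def)
  qed
  define e0 where "e0 = (\<lambda>l. (if l < n then i else 0) + (if l = 0 then d * j else 0))"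
  have e0M: "e0 \<in> monomials n a"
  proof -
    have "(\<Sum>l<n. e0 l) = (\<Sum>l<n. i) + (\<Sum>l<n. if l = 0 then d * j else 0)"
      by (simp add: e0_def sum.distrib)
    also have "\<dots> = n * i + d * j" using n by simp
    finally show ?thesis using a by (auto simp: monomials_def e0_def)
  qed
  have e0P: "P e0" by (auto simp: P_def e0_def r_def)
  have "\<forall>z\<in>V_set n d. hpoly_eval n a c z \<noteq> 0"
  proof
    fix z assume z: "z \<in> V_set n d"
    define Q where "Q = (\<Prod>l<n. z l ^ r)"
    have zd: "z l ^ d = 1" if "l < n" for l using z that by (simp add: V_set_def)
    have znz: "z l \<noteq> 0" if "l < n" for l using zd[OF that] d by (metis zero_power zero_neq_one)
    have Q0: "Q \<noteq> 0" using znz by (simp add: Q_def)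
    have "hpoly_eval n a c z = (\<Sum>e\<in>monomials n a. if P e then Q else 0)"
      unfolding hpoly_eval_def
    proof (rule sum.cong[OF refl])
      fix e assume "e \<in> monomials n a"
      show "c e * (\<Prod>l<n. z l ^ e l) = (if P e then Q else 0)"
      proof (cases "P e")
        case True
        have "(\<Prod>l<n. z l ^ e l) = Q" unfolding Q_def
        proof (rule prod.cong[OF refl])
          fix l assume "l \<in> {..<n}"
          hence l: "l < n" by simp
          have "z l ^ e l = z l ^ (e l mod d)" by (rule pow_mod_root[OF zd[OF l]])
          also have "e l mod d = r" using True l by (simp add: P_def)
          finally show "z l ^ e l = z l ^ r" .
        qed
        thus ?thesis using True by (simp add: c_def)
      qed (simp add: c_def)
    qed
    also have "\<dots> = (\<Sum>e\<in>{e\<in>monomials n a. P e}. Q)"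
      by (rule sum.inter_filter[symmetric]) (rule finite_monomials)
    also have "\<dots> = of_nat (card {e\<in>monomials n a. P e}) * Q" by simp
    finally have eq: "hpoly_eval n a c z = of_nat (card {e\<in>monomials n a. P e}) * Q" .
    have "finite {e\<in>monomials n a. P e}" using finite_monomials by simp
    moreover have "e0 \<in> {e\<in>monomials n a. P e}" using e0M e0P by simp
    ultimately have "card {e\<in>monomials n a. P e} \<noteq> 0" by (metis card_0_eq empty_iff)
    thus "hpoly_eval n a c z \<noteq> 0" using eq Q0 by simp
  qed
  with sym show ?thesis by (auto simp: good_triple_def)
qed


lemma bad_if_ndvd:
  assumes n: "n > 0" and d: "d > 0" and nd: "\<not> gcd d n dvd a"
  shows "\<not> good_triple n d a"
proof
  assume "good_triple n d a"
  then obtain c where sym: "symmetric_coeffs n a c"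
    and nz: "\<forall>z\<in>V_set n d. hpoly_eval n a c z \<noteq> 0" by (auto simp: good_triple_def)
  define g where "g = gcd d n"
  have g0: "g > 0" using n by (simp add: g_def)
  define w where "w = cis (2 * pi / real g)"
  have wpow: "w ^ k = cis (2 * pi * real k / real g)" for k
    by (simp add: w_def DeMoivre mult.commute)
  have w1: "w ^ k = 1" if gk: "g dvd k" for k
  proof -
    obtain t where t: "k = g * t" using gk by blast
    have "2 * pi * real k / real g = 2 * pi * real t" using g0 by (simp add: t)
    thus ?thesis by (simp add: wpow)
  qed
  have wa: "w ^ a \<noteq> 1"
  proof
    assume "w ^ a = 1"
    then obtain m where m: "2 * pi * real a / real g = of_int m * (2 * pi)"
      by (auto simp: wpow cis_eq_1_iff)
    hence "real a = of_int m * real g" using g0 by (simp add: field_simps)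
    hence "int a = m * int g" by (metis of_int_eq_iff of_int_mult of_int_of_nat_eq)
    hence "int g dvd int a" by simp
    with nd show False by (simp add: g_def)
  qed
  have gn: "g dvd n" and gd: "g dvd d" by (simp_all add: g_def)
  define z where "z = (\<lambda>l. if l < n then w ^ (l + 1) else 0)"
  have zV: "z \<in> V_set n d"
  proof -
    have "(w ^ (l + 1)) ^ d = 1" for l
      proof -
      have "(w ^ (l + 1)) ^ d = w ^ ((l + 1) * d)" by (simp only: power_mult)
      also have "\<dots> = 1" using gd by (intro w1) simp
      finally show ?thesis .
    qed
    moreover have "z (n - 1) = 1" using n w1[OF gn] by (simp add: z_def)
    ultimately show ?thesis by (simp add: V_set_def z_def)
  qed
  define \<sigma> where "\<sigma> = (\<lambda>l::nat. if l < n then (if l + 1 = n then 0 else l + 1) else l)"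
  define \<tau> where "\<tau> = (\<lambda>l::nat. if l < n then (if l = 0 then n - 1 else l - 1) else l)"
  have bij: "bij_betw \<sigma> {..<n} {..<n}"
    by (rule bij_betw_byWitness[where f' = \<tau>]) (auto simp: \<sigma>_def \<tau>_def n)
  have perm: "\<sigma> permutes {..<n}"
    by (rule bij_imp_permutes[OF bij]) (simp add: \<sigma>_def)
  have shift: "(\<lambda>l. w * z l) = z \<circ> \<sigma>"
  proof
    fix l
    show "w * z l = (z \<circ> \<sigma>) l"
    proof (cases "l < n")
      case True
      show ?thesis
      proof (cases "l + 1 = n")
        case True
        then show ?thesis using w1[OF gn] n by (simp add: z_def \<sigma>_def)
      next
        case False
        then show ?thesis using \<open>l < n\<close> by (simp add: z_def \<sigma>_def)
      qed
    qed (simp add: z_def \<sigma>_def)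
  qed
  have "w ^ a * hpoly_eval n a c z = hpoly_eval n a c z"
    using hpoly_scale[of n a c w z] hpoly_perm[OF sym perm, of z] shift by simp
  hence "(w ^ a - 1) * hpoly_eval n a c z = 0" by (simp add: algebra_simps)
  with wa have "hpoly_eval n a c z = 0" by simp
  with nz zV show False by blast
qed

theorem proposition3p16:
  fixes n d a :: nat
  assumes "n > 0" and "d > 0" and "a > 0"
    and "real a \<ge> real ((n - gcd d n) * (d - gcd d n)) / real (gcd d n)"
  shows "bad_triple n d a \<longleftrightarrow> \<not> (gcd d n dvd a)"
proof
  assume "bad_triple n d a"
  show "\<not> gcd d n dvd a"
  proof
    assume ga: "gcd d n dvd a"
    define g where "g = gcd d n"
    have g0: "g > 0" using assms(1) by (simp add: g_def)
    obtain p where p: "n = g * p" unfolding g_def by (metis gcd_dvd2 dvdE)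
    obtain q where q: "d = g * q" unfolding g_def by (metis gcd_dvd1 dvdE)
    obtain m where m: "a = g * m" using ga unfolding g_def by blast
    have pp: "p > 0" using p assms(1) by (cases p) auto
    have qp: "q > 0" using q assms(2) by (cases q) auto
    have cop: "coprime q p"
    proof -
      have "gcd d n = g * gcd q p" using p q by (simp add: gcd_mult_distrib_nat)
      hence "gcd q p = 1" using g0 unfolding g_def by auto
      thus ?thesis by (simp add: coprime_iff_gcd_eq_1)
    qed
    have e1: "n - g = g * (p - 1)" using p by (simp add: right_diff_distrib')
    have e2: "d - g = g * (q - 1)" using q by (simp add: right_diff_distrib')
    have "real a * real g \<ge> real ((n - g) * (d - g))"
      using assms(4) g0 by (simp add: g_def divide_le_eq mult.commute)
    hence "a * g \<ge> (n - g) * (d - g)" by (simp only: of_nat_mult[symmetric] of_nat_le_iff)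
    hence "g * m * g \<ge> g * (p - 1) * (g * (q - 1))" by (simp add: e1 e2 m)
    hence "(g * g) * m \<ge> (g * g) * ((p - 1) * (q - 1))" by (simp add: ac_simps)
    hence mm: "m \<ge> (p - 1) * (q - 1)" using g0 by simp
    obtain i j where ij: "m = i * p + j * q" using sylvester[OF cop pp qp mm] by blast
    have "a = i * n + j * d" using m ij p q by (simp add: algebra_simps)
    hence "good_triple n d a" using good_if_repr assms(1,2) by blast
    with \<open>bad_triple n d a\<close> show False by (simp add: bad_triple_def)
  qed
next
  assume "\<not> gcd d n dvd a"
  thus "bad_triple n d a" using bad_if_ndvd assms(1,2) by (simp add: bad_triple_def)
qed

end
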